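(* Consider the pay-to-bid game with re-entry and its unique symmetric subgame perfect equilibrium, and let the seller's expected revenue be the sale price $s$ plus the expected total bid fees collected. Then: (I) If players are risk neutral ($u(x)=x$), the seller's expected revenue equals $v$. If players are risk-loving ($\rho<0$): (II) the seller's expected revenue equals $\frac{c\,u(v-s)}{u(c)}+s$; (III) it is independent of the number of players $n$; (IV) it is strictly greater than $v$; (V) it is strictly increasing in $v$, decreasing in $s$, decreasing in $c$, and decreasing in $\rho$ (i.e. larger when players are more risk-loving); (VI) its supremum over sale prices $s\ge 0$ and bid fees $0<c<v-s$ (for fixed $v$ and $\rho$) equals $u(v)=\frac{1-e^{-\rho v}}{\rho}$.
   Context: Pay-to-bid game: an object has monetary value $v>0$ that is common knowledge; there are $n\ge 2$ players; the bid fee is $c>0$ and the fixed sale price is $s\ge 0$, with $c<v-s$. Play proceeds in rounds $t=1,2,3,\dots$ with complete information. In each round every player simultaneously chooses an action in $\{\text{Bid},\text{No Bid}\}$. Each Bid costs $c$, paid immediately to the seller. If exactly one player bids in a round, she wins the object (value $v$), pays $s$ to the seller, and the game ends; if two or more bid, play continues; if none bids, the round is replayed. With re-entry, all $n$ players are active in every round regardless of history. Players do not discount; payoff is $u$(final wealth) with $u(x)=\frac{1-e^{-\rho x}}{\rho}$ for a constant $\rho<0$ (constant absolute risk-loving utility), or $u(x)=x$ in the risk-neutral case. In the unique symmetric subgame perfect equilibrium each player plays Bid in every round with probability $1-\left(u(c)/u(v-s)\right)^{1/(n-1)}$. *)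

theory Defs
  imports Complex_Main
begin

text \<open>Constant absolute risk-loving (CARA) utility with coefficient rho (rho < 0 in the paper).\<close>
definition cara :: "real \<Rightarrow> real \<Rightarrow> real" where
  "cara \<rho> x = (1 - exp (- \<rho> * x)) / \<rho>"

text \<open>Per-round bid probability of each player in the unique symmetric SPE
  of the pay-to-bid game with re-entry, for utility u, n players, bid fee c,
  object value v and sale price s.\<close>
definition bid_prob :: "(real \<Rightarrow> real) \<Rightarrow> nat \<Rightarrow> real \<Rightarrow> real \<Rightarrow> real \<Rightarrow> real" where
  "bid_prob u n c v s = 1 - (u c / u (v - s)) powr (1 / (real n - 1))"

text \<open>Probability that a round ends the game (exactly one of n players bids),
  when each bids independently with probability p.\<close>
definition end_prob :: "nat \<Rightarrow> real \<Rightarrow> real" where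
  "end_prob n p = real n * p * (1 - p) ^ (n - 1)"

text \<open>Round t (t = 0,1,2,...) is reached with probability (1-q)^t, where q is the
  probability that a round ends the game; in a reached round the expected
  fees collected are n*p*c.\<close>
definition seller_revenue :: "(real \<Rightarrow> real) \<Rightarrow> nat \<Rightarrow> real \<Rightarrow> real \<Rightarrow> real \<Rightarrow> real" where
  "seller_revenue u n c v s =
     (let p = bid_prob u n c v s; q = end_prob n p
      in s + (\<Sum>t. (1 - q) ^ t * (real n * p * c)))"

end

theory Submission
  imports Defs
begin

lemma exp_strict: fixes x :: real assumes "x \<noteq> 0" shows "1 + x < exp x"
proof (cases "1 + x/2 \<ge> 0")
  case True
  have "exp x = exp (x/2)^2" by (simp add: power2_eq_square flip: exp_add)
  moreover have "(1 + x/2)^2 \<le> exp (x/2)^2"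
    using True exp_ge_add_one_self[of "x/2"] by (simp add: power_mono)
  moreover have "1 + x < (1 + x/2)^2" using assms by (auto simp add: power2_eq_square field_simps zero_less_mult_iff)
  ultimately show ?thesis by linarith
next
  case False
  then show ?thesis using exp_gt_zero[of x] by linarith
qed

lemma binom_bound: fixes p :: real assumes "0 \<le> p" "p \<le> 1" "n \<ge> 1"
  shows "real n * p * (1 - p) ^ (n - 1) \<le> 1"
proof -
  have "1 = (p + (1 - p)) ^ n" by simp
  also have "\<dots> = (\<Sum>k\<le>n. real (n choose k) * p ^ k * (1 - p) ^ (n - k))"
    by (rule binomial_ring)
  finally have eq: "(\<Sum>k\<le>n. real (n choose k) * p ^ k * (1 - p) ^ (n - k)) = 1" by simp
  have "real (n choose 1) * p ^ 1 * (1 - p) ^ (n - 1) \<le> (\<Sum>k\<le>n. real (n choose k) * p ^ k * (1 - p) ^ (n - k))"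
    by (rule member_le_sum) (use assms in auto)
  then show ?thesis using eq by simp
qed

lemma revenue_formula:
  fixes u :: "real \<Rightarrow> real"
  assumes "0 < u c" "u c < u (v - s)" "n \<ge> 2"
  shows "seller_revenue u n c v s = c * u (v - s) / u c + s"
proof -
  define r where "r = u c / u (v - s)"
  have r0: "0 < r" and r1: "r < 1" using assms by (auto simp: r_def)
  define e where "e = 1 / (real n - 1)"
  have e0: "e > 0" using assms(3) by (simp add: e_def)
  define p where "p = bid_prob u n c v s"
  have p: "p = 1 - r powr e" by (simp add: p_def bid_prob_def r_def e_def)
  have "r powr e < 1" using powr_less_mono2[of e r 1] r0 r1 e0 by simp
  hence pp: "0 < p" using p by simp
  have rp: "0 < r powr e" using r0 by simp
  have p1: "p \<le> 1" using p rp by simp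
  have nm: "real n - 1 = real (n - 1)" using assms(3) by simp
  have "(1 - p) ^ (n - 1) = (r powr e) powr real (n - 1)"
    using rp by (simp add: p powr_realpow)
  also have "\<dots> = r" using nm assms(3) r0 by (simp add: powr_powr e_def)
  finally have pw: "(1 - p) ^ (n - 1) = r" .
  define q where "q = end_prob n p"
  have q: "q = real n * p * r" unfolding q_def end_prob_def pw by simp
  have q0: "0 < q" using q pp r0 assms(3) by simp
  have q1: "q \<le> 1" unfolding q_def end_prob_def using binom_bound[of p n] pp p1 assms(3) by simp
  have "(\<Sum>t. (1 - q) ^ t) = 1 / q" using q0 q1 by (subst suminf_geometric) auto
  moreover have "summable (\<lambda>t. (1 - q) ^ t)" using q0 q1 by (intro summable_geometric) auto
  ultimately have "(\<Sum>t. (1 - q) ^ t * (real n * p * c)) = (real n * p * c) / q"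
    by (simp add: suminf_mult2[symmetric])
  also have "\<dots> = c / r" using q pp assms(3) r0 by (simp add: field_simps)
  finally have S: "(\<Sum>t. (1 - q) ^ t * (real n * p * c)) = c / r" .
  show ?thesis unfolding seller_revenue_def Let_def p_def[symmetric] q_def[symmetric] S
    using assms by (simp add: r_def)
qed

definition U :: "real \<Rightarrow> real \<Rightarrow> real" where "U a x = (exp (a * x) - 1) / a"

lemma cara_U: "cara \<rho> x = U (- \<rho>) x"
  unfolding cara_def U_def by (simp add: diff_divide_distrib)

lemma U_gt: assumes "a > 0" "x > 0" shows "x < U a x"
proof -
  have "1 + a * x < exp (a * x)" using assms by (intro exp_strict) simp
  thus ?thesis using assms by (simp add: U_def field_simps)
qed

lemma U_pos: assumes "a > 0" "x > 0" shows "0 < U a x"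
  using U_gt[OF assms] assms by simp

lemma U_lower: assumes "a > 0" "x < y" shows "exp (a * x) * (y - x) \<le> U a y - U a x"
proof -
  have "1 + a * (y - x) \<le> exp (a * (y - x))" by (rule exp_ge_add_one_self)
  hence "exp (a * x) * (1 + a * (y - x)) \<le> exp (a * x) * exp (a * (y - x))" by simp
  also have "\<dots> = exp (a * y)" by (simp flip: exp_add add: algebra_simps)
  finally show ?thesis using assms by (simp add: U_def field_simps)
qed

lemma U_mono: assumes "a > 0" "x < y" shows "U a x < U a y"
  using assms by (simp add: U_def divide_strict_right_mono)

lemma U_upper: assumes "a > 0" "x > 0" shows "U a x < x * exp (a * x)"
proof -
  have "1 + (- a * x) < exp (- a * x)" using assms by (intro exp_strict) simp
  hence "exp (a * x) * (1 - a * x) < exp (a * x) * exp (- a * x)" by simp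
  also have "\<dots> = 1" by (simp flip: exp_add)
  finally show ?thesis using assms by (simp add: U_def field_simps)
qed

lemma U_slope: assumes "a > 0" "0 < x" "x < y" shows "U a x / x < U a y / y"
proof -
  define d where "d = y - x"
  define E where "E = exp (a * x)"
  define F where "F = exp (a * d)"
  have d: "d > 0" using assms by (simp add: d_def)
  have EF: "exp (a * y) = E * F" by (simp add: E_def F_def d_def flip: exp_add add: algebra_simps)
  have F: "a * d < F - 1" using exp_strict[of "a*d"] assms d by (simp add: F_def)
  have E: "E - 1 \<le> a * x * E" using U_upper[OF assms(1,2)] assms by (simp add: U_def E_def field_simps)
  have E0: "E > 0" by (simp add: E_def)
  have "x * E * (a * d) < x * E * (F - 1)" using F assms E0 by simp
  moreover have "d * (E - 1) \<le> x * E * (a * d)" using E d mult_right_mono[OF E, of d] by (simp add: algebra_simps)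
  ultimately have key: "d * (E - 1) < x * E * (F - 1)" by linarith
  have "(E - 1) / x < (E * F - 1) / y"
    using key assms by (simp add: field_simps d_def)
  moreover have "U a x / x = ((E - 1)/x)/a" by (simp add: U_def E_def)
  moreover have "U a y / y = ((E*F - 1)/y)/a" by (simp add: U_def EF)
  ultimately show ?thesis using assms divide_strict_right_mono[of "(E - 1)/x" "(E*F - 1)/y" a] by simp
qed

lemma phi_mono: fixes z1 z2 :: real assumes "0 < z1" "z1 < z2"
  shows "z1 * (exp z2 - 1) * exp z1 < z2 * (exp z1 - 1) * exp z2"
proof -
  define d where "d = z2 - z1"
  have d: "d > 0" using assms by (simp add: d_def)
  have z2: "exp z2 = exp z1 * exp d" by (simp add: d_def flip: exp_add)
  have ed: "exp d - 1 < d * exp d"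
  proof -
    have "1 + (- d) < exp (- d)" using d by (intro exp_strict) simp
    hence "exp d * (1 - d) < exp d * exp (- d)" by simp
    thus ?thesis by (simp flip: exp_add add: algebra_simps)
  qed
  have ez: "z1 \<le> exp z1 - 1" using exp_ge_add_one_self[of z1] by linarith
  have D0: "exp d > 0" by simp
  have "z1 * (exp d - 1) < z1 * (d * exp d)" using ed assms by simp
  also have "\<dots> \<le> (exp z1 - 1) * (d * exp d)" using ez d D0 by (intro mult_right_mono) auto
  finally have k: "z1 * (exp z1 * exp d - 1) < (z1 + d) * (exp z1 - 1) * exp d"
    by (simp add: algebra_simps)
  have "exp z1 * (z1 * (exp z1 * exp d - 1)) < exp z1 * ((z1 + d) * (exp z1 - 1) * exp d)"
    using k by simp
  thus ?thesis by (simp add: z2 d_def algebra_simps)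
qed


lemma ratio_mono: fixes a b c x :: real assumes "0 < c" "c < x" "0 < a" "a < b"
  shows "(exp (a*x) - 1) / (exp (a*c) - 1) < (exp (b*x) - 1) / (exp (b*c) - 1)"
proof (rule DERIV_pos_imp_increasing[OF assms(4)])
  fix t assume t: "a \<le> t" "t \<le> b"
  hence t0: "t > 0" using assms by simp
  have ne: "exp (t*c) - 1 > 0" using t0 assms by (simp add: exp_gt_one)
  have "t*c*(exp (t*x) - 1)*exp (t*c) < t*x*(exp (t*c) - 1)*exp (t*x)"
    using phi_mono[of "t*c" "t*x"] t0 assms by simp
  hence num: "c*(exp (t*x) - 1)*exp (t*c) < x*(exp (t*c) - 1)*exp (t*x)"
    using t0 by (simp add: mult.assoc)
  define D where "D = (x * exp (t*x) * (exp (t*c) - 1) - (exp (t*x) - 1) * (c * exp (t*c))) / (exp (t*c) - 1)^2"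
  have "((\<lambda>t. (exp (t*x) - 1) / (exp (t*c) - 1)) has_real_derivative D) (at t)"
    unfolding D_def using ne
    by (auto intro!: derivative_eq_intros simp: power2_eq_square algebra_simps)
  moreover have "D > 0" unfolding D_def
  proof (rule divide_pos_pos)
    show "0 < x * exp (t*x) * (exp (t*c) - 1) - (exp (t*x) - 1) * (c * exp (t*c))"
      using num by (simp add: algebra_simps)
    show "0 < (exp (t*c) - 1)^2" using ne by (simp only: zero_less_power)
  qed
  ultimately show "\<exists>y. ((\<lambda>t. (exp (t*x) - 1) / (exp (t*c) - 1)) has_real_derivative y) (at t) \<and> y > 0"
    by blast
qed


lemma U_ratio: "b > 0 \<Longrightarrow> U b x / U b y = (exp (b*x) - 1) / (exp (b*y) - 1)"
  by (simp add: U_def)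

lemma cara_rev: assumes "\<rho> < 0" "0 < c" "c < v - s" "n \<ge> 2"
  shows "seller_revenue (cara \<rho>) n c v s = c * U (- \<rho>) (v - s) / U (- \<rho>) c + s"
  using revenue_formula[of "cara \<rho>" c v s n] assms U_pos[of "-\<rho>" c] U_mono[of "-\<rho>" c "v - s"]
  by (simp add: cara_U)

theorem theorem3:
  fixes v c s \<rho> :: real and n :: nat
  assumes "v > 0" and "n \<ge> 2" and "c > 0" and "s \<ge> 0" and "c < v - s"
  shows "seller_revenue (\<lambda>x. x) n c v s = v
    \<and> (\<rho> < 0 \<longrightarrow>
        seller_revenue (cara \<rho>) n c v s = c * cara \<rho> (v - s) / cara \<rho> c + s
      \<and> (\<forall>m::nat. m \<ge> 2 \<longrightarrow> seller_revenue (cara \<rho>) m c v s = seller_revenue (cara \<rho>) n c v s)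
      \<and> seller_revenue (cara \<rho>) n c v s > v
      \<and> (\<forall>v'. v < v' \<longrightarrow> seller_revenue (cara \<rho>) n c v s < seller_revenue (cara \<rho>) n c v' s)
      \<and> (\<forall>s'. 0 \<le> s' \<and> s' < s \<longrightarrow> seller_revenue (cara \<rho>) n c v s < seller_revenue (cara \<rho>) n c v s')
      \<and> (\<forall>c'. 0 < c' \<and> c' < c \<longrightarrow> seller_revenue (cara \<rho>) n c v s < seller_revenue (cara \<rho>) n c' v s)
      \<and> (\<forall>\<rho>'. \<rho>' < \<rho> \<longrightarrow> seller_revenue (cara \<rho>) n c v s < seller_revenue (cara \<rho>') n c v s)
      \<and> (SUP sc\<in>{(s', c'). 0 \<le> s' \<and> 0 < c' \<and> c' < v - s'}.
            seller_revenue (cara \<rho>) n (snd sc) v (fst sc)) = cara \<rho> v)"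
proof (intro conjI impI)
  show "seller_revenue (\<lambda>x. x) n c v s = v"
    using revenue_formula[of "\<lambda>x. x" c v s n] assms by simp
  assume r: "\<rho> < 0"
  define a where "a = - \<rho>"
  have a: "a > 0" using r by (simp add: a_def)
  have R: "\<And>m c v s. m \<ge> 2 \<Longrightarrow> 0 < c \<Longrightarrow> c < v - s \<Longrightarrow>
      seller_revenue (cara \<rho>) m c v s = c * U a (v - s) / U a c + s"
    using cara_rev[OF r] by (simp add: a_def)
  have Uc: "U a c > 0" using U_pos[OF a assms(3)] .
  show "seller_revenue (cara \<rho>) n c v s = c * cara \<rho> (v - s) / cara \<rho> c + s"
    using R[OF assms(2,3,5)] by (simp add: cara_U a_def)
  show "\<forall>m::nat. m \<ge> 2 \<longrightarrow> seller_revenue (cara \<rho>) m c v s = seller_revenue (cara \<rho>) n c v s"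
    using R assms by simp
  show "seller_revenue (cara \<rho>) n c v s > v"
  proof -
    have "U a c / c < U a (v - s) / (v - s)" using U_slope[OF a assms(3,5)] .
    hence "v - s < c * U a (v - s) / U a c" using Uc assms by (simp add: field_simps)
    thus ?thesis using R[OF assms(2,3,5)] by simp
  qed
  show "\<forall>v'. v < v' \<longrightarrow> seller_revenue (cara \<rho>) n c v s < seller_revenue (cara \<rho>) n c v' s"
  proof (intro allI impI)
    fix v' assume v': "v < v'"
    have "U a (v - s) < U a (v' - s)" using U_mono[OF a] v' by simp
    hence "c * U a (v - s) / U a c < c * U a (v' - s) / U a c" using Uc assms by (simp add: divide_strict_right_mono)
    thus "seller_revenue (cara \<rho>) n c v s < seller_revenue (cara \<rho>) n c v' s"
      using R[OF assms(2,3,5)] R[OF assms(2,3), of v' s] assms v' by simp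
  qed
  show "\<forall>s'. 0 \<le> s' \<and> s' < s \<longrightarrow> seller_revenue (cara \<rho>) n c v s < seller_revenue (cara \<rho>) n c v s'"
  proof (intro allI impI)
    fix s' assume s': "0 \<le> s' \<and> s' < s"
    have L: "exp (a * (v - s)) * (s - s') \<le> U a (v - s') - U a (v - s)" using U_lower[OF a, of "v - s" "v - s'"] s' by simp
    have "U a c < c * exp (a * c)" using U_upper[OF a assms(3)] .
    also have "\<dots> < c * exp (a * (v - s))" using a assms by simp
    finally have "U a c / c < exp (a * (v - s))" using assms by (simp add: field_simps)
    hence "(s - s') * (U a c / c) < (s - s') * exp (a * (v - s))" by (intro mult_strict_left_mono) (use s' in auto)
    also have "\<dots> \<le> U a (v - s') - U a (v - s)" using L by (simp add: mult.commute)
    finally have "(s - s') * U a c < c * (U a (v - s') - U a (v - s))" using assms by (simp add: field_simps)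
    hence "s - s' < c * (U a (v - s') - U a (v - s)) / U a c" using Uc by (simp add: pos_less_divide_eq mult.commute)
    hence "c * U a (v - s) / U a c + s < c * U a (v - s') / U a c + s'" by (simp add: right_diff_distrib diff_divide_distrib)
    thus "seller_revenue (cara \<rho>) n c v s < seller_revenue (cara \<rho>) n c v s'"
      using R[OF assms(2,3,5)] R[OF assms(2,3), of v s'] assms s' by simp
  qed
  show "\<forall>c'. 0 < c' \<and> c' < c \<longrightarrow> seller_revenue (cara \<rho>) n c v s < seller_revenue (cara \<rho>) n c' v s"
  proof (intro allI impI)
    fix c' assume c': "0 < c' \<and> c' < c"
    have "U a c' / c' < U a c / c" using U_slope[OF a] c' by simp
    moreover have "U a c' > 0" using U_pos[OF a] c' by simp
    ultimately have "c / U a c < c' / U a c'" using Uc c' assms by (simp add: field_simps)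
    moreover have "U a (v - s) > 0" using U_pos[OF a] assms by simp
    ultimately have "c / U a c * U a (v - s) < c' / U a c' * U a (v - s)" by (intro mult_strict_right_mono)
    hence "c * U a (v - s) / U a c < c' * U a (v - s) / U a c'" by (simp add: mult.commute mult.left_commute times_divide_eq_left)
    thus "seller_revenue (cara \<rho>) n c v s < seller_revenue (cara \<rho>) n c' v s"
      using R[OF assms(2,3,5)] R[OF assms(2), of c' v s] assms c' by simp
  qed
  show "\<forall>\<rho>'. \<rho>' < \<rho> \<longrightarrow> seller_revenue (cara \<rho>) n c v s < seller_revenue (cara \<rho>') n c v s"
  proof (intro allI impI)
    fix \<rho>' assume rr: "\<rho>' < \<rho>"
    have "(exp (a*(v-s)) - 1) / (exp (a*c) - 1) < (exp ((-\<rho>')*(v-s)) - 1) / (exp ((-\<rho>')*c) - 1)"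
      using ratio_mono[of c "v - s" a "-\<rho>'"] assms a rr by (simp add: a_def)
    hence "U a (v - s) / U a c < U (-\<rho>') (v - s) / U (-\<rho>') c"
      using U_ratio[of a "v - s" c] U_ratio[of "-\<rho>'" "v - s" c] a rr r by (simp only:)
    hence "c * (U a (v - s) / U a c) < c * (U (-\<rho>') (v - s) / U (-\<rho>') c)" using assms by (intro mult_strict_left_mono) auto
    hence "c * U a (v - s) / U a c < c * U (-\<rho>') (v - s) / U (-\<rho>') c" by (simp only: times_divide_eq_right)
    thus "seller_revenue (cara \<rho>) n c v s < seller_revenue (cara \<rho>') n c v s"
      using R[OF assms(2,3,5)] cara_rev[of \<rho>' c v s n] rr r assms by simp
  qed
  show "(SUP sc\<in>{(s', c'). 0 \<le> s' \<and> 0 < c' \<and> c' < v - s'}.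
            seller_revenue (cara \<rho>) n (snd sc) v (fst sc)) = cara \<rho> v"
  proof -
    define S where "S = {(s', c'). 0 \<le> s' \<and> 0 < c' \<and> c' < v - s'}"
    define f where "f = (\<lambda>sc. seller_revenue (cara \<rho>) n (snd sc) v (fst sc))"
    have Uv: "U a v > 0" using U_pos[OF a assms(1)] .
    have ub: "f sc \<le> U a v" if sc: "sc \<in> S" for sc
    proof -
      obtain s' c' where sc': "sc = (s', c')" by (cases sc)
      have h: "0 \<le> s'" "0 < c'" "c' < v - s'" using sc by (auto simp: S_def sc')
      have fe: "f sc = c' * U a (v - s') / U a c' + s'" using R[OF assms(2) h(2,3)] by (simp add: f_def sc')
      have Uc': "U a c' > c'" using U_gt[OF a h(2)] .
      have Uvs: "U a (v - s') > 0" using U_pos[OF a] h by simp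
      have "c' * U a (v - s') \<le> U a c' * U a (v - s')" using Uc' Uvs by (intro mult_right_mono) auto
      hence t1: "c' * U a (v - s') / U a c' \<le> U a (v - s')" using Uc' h by (simp add: pos_divide_le_eq mult.commute)
      have t2: "U a (v - s') + s' \<le> U a v"
      proof (cases "s' = 0")
        case False
        hence "v - s' < v" using h by simp
        from U_lower[OF a this] have "exp (a * (v - s')) * s' \<le> U a v - U a (v - s')" by simp
        moreover have "1 \<le> exp (a * (v - s'))" using a h by simp
        ultimately have "s' \<le> U a v - U a (v - s')" using h(1) mult_right_mono[of 1 "exp (a * (v - s'))" s'] by linarith
        thus ?thesis by simp
      qed simp
      show ?thesis using fe t1 t2 by simp
    qed
    have lb: "U a v * exp (- a * c) \<le> f (0, c)" if c: "0 < c" "c < v" for c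
    proof -
      have fe: "f (0, c) = c * U a v / U a c" using R[OF assms(2), of c v 0] c by (simp add: f_def)
      have Uc: "U a c > 0" using U_pos[OF a c(1)] .
      have "U a c < c * exp (a * c)" using U_upper[OF a c(1)] .
      hence "exp (- a * c) < c / U a c" using Uc by (simp add: pos_less_divide_eq exp_minus field_simps)
      hence "U a v * exp (- a * c) \<le> U a v * (c / U a c)" using Uv by (intro mult_left_mono) auto
      thus ?thesis using fe by (simp only: times_divide_eq_right mult.commute)
    qed
    have ne: "f ` S \<noteq> {}" using assms by (auto simp: S_def intro!: exI[of _ "(0, v/2)"])
    have "Sup (f ` S) = U a v"
    proof (rule cSup_eq_non_empty[OF ne])
      show "\<And>x. x \<in> f ` S \<Longrightarrow> x \<le> U a v" using ub by auto
      fix y assume y: "\<And>x. x \<in> f ` S \<Longrightarrow> x \<le> y"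
      have lim: "((\<lambda>c. U a v * exp (- a * c)) \<longlongrightarrow> U a v * exp (- a * 0)) (at_right 0)"
        by (intro tendsto_intros)
      have ev: "eventually (\<lambda>c. U a v * exp (- a * c) \<le> y) (at_right 0)"
        using eventually_at_right_real[OF assms(1)]
      proof (rule eventually_mono)
        fix c :: real assume "c \<in> {0<..<v}"
        hence c: "0 < c" "c < v" by auto
        have "(0, c) \<in> S" using c by (simp add: S_def)
        hence "f (0, c) \<le> y" using y by auto
        thus "U a v * exp (- a * c) \<le> y" using lb[OF c] by linarith
      qed
      show "U a v \<le> y" using tendsto_upperbound[OF lim ev] by simp
    qed
    thus ?thesis by (simp add: S_def f_def cara_U a_def)
  qed
qed

end
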